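(* Let $K$ be a compact line and let $G:K\to\mathbb{R}$ be a regulated function. Then $G$ is the uniform limit of step functions. In particular, $G$ is Borel measurable.
   Context: A compact line is a compact space $K$ whose topology is the order topology of a linear order on $K$; $0_K$ and $1_K$ denote its minimum and maximum, and $0_K<1_K$. A point $x\in(0_K,1_K]$ is left-dense if it has no immediate predecessor; $x\in[0_K,1_K)$ is right-dense if it has no immediate successor. $G:K\to\mathbb{R}$ is regulated if for every left-dense $x$ the limit $\lim_{y\nearrow x}G(y)$ exists, and for every right-dense $x$, $\lim_{y\searrow x}G(y)=G(x)$. A function $S:K\to\mathbb{R}$ is a step function if there are points $0_K=s_0<s_1<\cdots<s_n=1_K$ such that $S$ is constant on each open interval $(s_{k-1},s_k)$, $k=1,\dots,n$. *)

theory Defs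
  imports "HOL-Analysis.Analysis"
begin

text \<open>A compact line is modelled as a type of class linorder_topology
  (topology = order topology) whose universe is compact, with at least two points.\<close>

definition left_dense :: "'a::linorder \<Rightarrow> bool" where
  "left_dense x \<longleftrightarrow> (\<exists>y. y < x) \<and> (\<forall>y. y < x \<longrightarrow> (\<exists>z. y < z \<and> z < x))"

definition right_dense :: "'a::linorder \<Rightarrow> bool" where
  "right_dense x \<longleftrightarrow> (\<exists>y. x < y) \<and> (\<forall>y. x < y \<longrightarrow> (\<exists>z. x < z \<and> z < y))"

definition regulated :: "('a::linorder_topology \<Rightarrow> real) \<Rightarrow> bool" where
  "regulated G \<longleftrightarrow>
     (\<forall>x. left_dense x \<longrightarrow> (\<exists>L. (G \<longlongrightarrow> L) (at_left x))) \<and>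
     (\<forall>x. right_dense x \<longrightarrow> (G \<longlongrightarrow> G x) (at_right x))"

definition step_function :: "('a::linorder \<Rightarrow> real) \<Rightarrow> bool" where
  "step_function S \<longleftrightarrow>
     (\<exists>(s::nat \<Rightarrow> 'a) n. (\<forall>x. s 0 \<le> x) \<and> (\<forall>x. x \<le> s n) \<and>
        (\<forall>k<n. s k < s (Suc k)) \<and>
        (\<forall>k<n. \<exists>c. \<forall>x. s k < x \<and> x < s (Suc k) \<longrightarrow> S x = c))"

end

theory Submission imports Defs begin

lemma sorted_mono_le:
  fixes xs :: "'a::linorder list"
  assumes "sorted_wrt (<) xs" "i \<le> j" "j < length xs"
  shows "xs ! i \<le> xs ! j"
  using assms sorted_wrt_nth_less[of "(<)" xs i j] by (cases "i = j") auto

lemma step_from_finite: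
  fixes S :: "'a::linorder \<Rightarrow> real"
  assumes fin: "finite F" and m: "m \<in> F" "\<forall>x. m \<le> x" and M: "M \<in> F" "\<forall>x. x \<le> M"
  and cst: "\<And>a b. a\<in>F \<Longrightarrow> b\<in>F \<Longrightarrow> a<b \<Longrightarrow> (\<forall>z\<in>F. \<not>(a<z \<and> z<b)) \<Longrightarrow> \<exists>c. \<forall>x. a<x \<and> x<b \<longrightarrow> S x = c"
  shows "step_function S"
proof -
  define xs where "xs = sorted_list_of_set F"
  have sw: "sorted_wrt (<) xs" unfolding xs_def by (rule strict_sorted_list_of_set)
  have setxs: "set xs = F" unfolding xs_def using fin by simp
  have len: "length xs = card F" unfolding xs_def by simp
  have cpos: "card F \<ge> 1" using fin m(1) card_0_eq by fastforce
  define n where "n = card F - 1"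
  have nlen: "n < length xs" using len cpos n_def by simp
  define s where "s = (\<lambda>k. xs ! k)"
  have inF: "k \<le> n \<Longrightarrow> s k \<in> F" for k using nlen setxs s_def by auto
  have s0: "\<forall>x. s 0 \<le> x"
  proof
    fix x
    obtain j where j: "j < length xs" "xs ! j = m" using m(1) setxs by (metis in_set_conv_nth)
    have "s 0 \<le> xs ! j" unfolding s_def using sorted_mono_le[OF sw _ j(1), of 0] by simp
    then show "s 0 \<le> x" using j m(2) by (metis order_trans)
  qed
  have sn: "\<forall>x. x \<le> s n"
  proof
    fix x
    obtain j where j: "j < length xs" "xs ! j = M" using M(1) setxs by (metis in_set_conv_nth)
    have "xs ! j \<le> s n" unfolding s_def using sorted_mono_le[OF sw _ nlen, of j] j len n_def by simp
    then show "x \<le> s n" using j M(2) by (metis order_trans)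
  qed
  have smono: "\<forall>k<n. s k < s (Suc k)"
    using sorted_wrt_nth_less[OF sw] nlen s_def by auto
  have scst: "\<forall>k<n. \<exists>c. \<forall>x. s k < x \<and> x < s (Suc k) \<longrightarrow> S x = c"
  proof (intro allI impI)
    fix k assume k: "k < n"
    have "\<forall>z\<in>F. \<not>(s k < z \<and> z < s (Suc k))"
    proof (intro ballI notI)
      fix z assume z: "z \<in> F" "s k < z \<and> z < s (Suc k)"
      obtain j where j: "j < length xs" "xs ! j = z" using z(1) setxs by (metis in_set_conv_nth)
      show False
      proof (cases "j \<le> k")
        case True
        then have "xs ! j \<le> xs ! k" using sorted_mono_le[OF sw True] k nlen by simp
        then show False using z j unfolding s_def by (meson leD)
      next
        case False
        then have "Suc k \<le> j" by simp
        then have "xs ! Suc k \<le> xs ! j" using sorted_mono_le[OF sw _ j(1)] by simp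
        then show False using z j unfolding s_def by (meson leD)
      qed
    qed
    then show "\<exists>c. \<forall>x. s k < x \<and> x < s (Suc k) \<longrightarrow> S x = c"
      using cst[of "s k" "s (Suc k)"] inF k smono by simp
  qed
  show ?thesis unfolding step_function_def
    using s0 sn smono scst by blast
qed

lemma approx_step:
  fixes G :: "'a::linorder_topology \<Rightarrow> real"
  assumes cpt: "compact (UNIV::'a set)" and reg: "regulated G" and e: "e > 0"
  shows "\<exists>S. step_function S \<and> (\<forall>x. \<bar>S x - G x\<bar> \<le> e)"
proof -
  obtain m :: 'a where m: "\<forall>x. m \<le> x" using compact_attains_inf[OF cpt] by auto
  obtain M :: 'a where M: "\<forall>x. x \<le> M" using compact_attains_sup[OF cpt] by auto
  have left: "\<forall>x. \<exists>l L. x \<noteq> m \<longrightarrow> l < x \<and> (\<forall>z. l < z \<and> z < x \<longrightarrow> \<bar>G z - L\<bar> \<le> e)"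
  proof (intro allI)
    fix x
    show "\<exists>l L. x \<noteq> m \<longrightarrow> l < x \<and> (\<forall>z. l < z \<and> z < x \<longrightarrow> \<bar>G z - L\<bar> \<le> e)"
    proof (cases "x = m")
      case True then show ?thesis by blast
    next
      case False
      then have mx: "m < x" using m[rule_format, of x] by (auto simp: less_le)
      show ?thesis
      proof (cases "left_dense x")
        case True
        have regl: "\<forall>x. left_dense x \<longrightarrow> (\<exists>L. (G \<longlongrightarrow> L) (at_left x))"
          using reg unfolding regulated_def by (rule conjunct1)
        obtain L where L: "(G \<longlongrightarrow> L) (at_left x)" using regl True by blast
        have ev: "eventually (\<lambda>z. dist (G z) L < e) (at_left x)" using tendstoD[OF L e] .
        have "\<exists>b<x. \<forall>z>b. z<x \<longrightarrow> dist (G z) L < e"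
          using ev unfolding eventually_at_left[OF mx] .
        then obtain b where b: "b<x" "\<forall>z>b. z<x \<longrightarrow> dist (G z) L < e" by blast
        show ?thesis
        proof (intro exI[of _ b] exI[of _ L] impI conjI allI)
          show "b < x" by (rule b(1))
          fix z assume "b < z \<and> z < x"
          then have "dist (G z) L < e" using b(2) by blast
          then show "\<bar>G z - L\<bar> \<le> e" by (simp add: dist_real_def)
        qed
      next
        case False
        then obtain y where "y<x" "\<forall>z. \<not>(y<z \<and> z<x)" using mx unfolding left_dense_def by blast
        then show ?thesis by (intro exI[of _ y] exI[of _ 0]) blast
      qed
    qed
  qed
  have right: "\<forall>x. \<exists>r. x \<noteq> M \<longrightarrow> x < r \<and> (\<forall>z. x < z \<and> z < r \<longrightarrow> \<bar>G z - G x\<bar> \<le> e)"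
  proof (intro allI)
    fix x
    show "\<exists>r. x \<noteq> M \<longrightarrow> x < r \<and> (\<forall>z. x < z \<and> z < r \<longrightarrow> \<bar>G z - G x\<bar> \<le> e)"
    proof (cases "x = M")
      case True then show ?thesis by blast
    next
      case False
      then have mx: "x < M" using M[rule_format, of x] by (auto simp: less_le)
      show ?thesis
      proof (cases "right_dense x")
        case True
        have regr: "\<forall>x. right_dense x \<longrightarrow> (G \<longlongrightarrow> G x) (at_right x)"
          using reg unfolding regulated_def by (rule conjunct2)
        have L: "(G \<longlongrightarrow> G x) (at_right x)" using regr True by blast
        have ev: "eventually (\<lambda>z. dist (G z) (G x) < e) (at_right x)" using tendstoD[OF L e] .
        have "\<exists>b>x. \<forall>z>x. z<b \<longrightarrow> dist (G z) (G x) < e"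
          using ev unfolding eventually_at_right[OF mx] .
        then obtain b where b: "b>x" "\<forall>z>x. z<b \<longrightarrow> dist (G z) (G x) < e" by blast
        show ?thesis
        proof (intro exI[of _ b] impI conjI allI)
          show "x < b" by (rule b(1))
          fix z assume "x < z \<and> z < b"
          then have "dist (G z) (G x) < e" using b(2) by blast
          then show "\<bar>G z - G x\<bar> \<le> e" by (simp add: dist_real_def)
        qed
      next
        case False
        then obtain y where "x<y" "\<forall>z. \<not>(x<z \<and> z<y)" using mx unfolding right_dense_def by blast
        then show ?thesis by (intro exI[of _ y]) blast
      qed
    qed
  qed
  from choice[OF left] obtain l where l: "\<forall>x. \<exists>L. x \<noteq> m \<longrightarrow> l x < x \<and> (\<forall>z. l x < z \<and> z < x \<longrightarrow> \<bar>G z - L\<bar> \<le> e)" ..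
  from choice[OF l] obtain L where lL0: "\<forall>x. x \<noteq> m \<longrightarrow> l x < x \<and> (\<forall>z. l x < z \<and> z < x \<longrightarrow> \<bar>G z - L x\<bar> \<le> e)" ..
  have lL: "x \<noteq> m \<Longrightarrow> l x < x \<and> (\<forall>z. l x < z \<and> z < x \<longrightarrow> \<bar>G z - L x\<bar> \<le> e)" for x
    using lL0 by blast
  from choice[OF right] obtain r where rr0: "\<forall>x. x \<noteq> M \<longrightarrow> x < r x \<and> (\<forall>z. x < z \<and> z < r x \<longrightarrow> \<bar>G z - G x\<bar> \<le> e)" ..
  have rr: "x \<noteq> M \<Longrightarrow> x < r x \<and> (\<forall>z. x < z \<and> z < r x \<longrightarrow> \<bar>G z - G x\<bar> \<le> e)" for x
    using rr0 by blast
  define U where "U x = {z. (x = m \<or> l x < z) \<and> (x = M \<or> z < r x)}" for x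
  have Ueq: "U x = (if x = m then UNIV else {l x<..}) \<inter> (if x = M then UNIV else {..<r x})" for x
    by (auto simp: U_def)
  have Uopen: "open (U x)" for x unfolding Ueq by auto
  have Ucov: "UNIV \<subseteq> (\<Union>x\<in>UNIV. U x)"
  proof
    fix x :: 'a
    have "x \<in> U x" using lL[of x] rr[of x] by (auto simp: U_def)
    then show "x \<in> (\<Union>x\<in>UNIV. U x)" by blast
  qed
  have opn: "\<And>T. T \<in> UNIV \<Longrightarrow> open (U T)" using Uopen by blast
  obtain C0 where C0: "C0 \<subseteq> UNIV" "finite C0" "UNIV \<subseteq> (\<Union>x\<in>C0. U x)"
    by (rule compactE_image[OF cpt opn Ucov])
  have C: "finite C0" "UNIV \<subseteq> (\<Union>x\<in>C0. U x)" using C0 by auto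
  define C where "C = C0"
  note C = C[folded C_def]
  define F where "F = {m,M} \<union> C \<union> l`C \<union> r`C"
  have finF: "finite F" using C(1) by (simp add: F_def)
  have key: "\<exists>c. \<forall>z. a<z \<and> z<b \<longrightarrow> \<bar>G z - c\<bar> \<le> e"
    if ab: "a\<in>F" "b\<in>F" "a<b" "\<forall>z\<in>F. \<not>(a<z \<and> z<b)" for a b
  proof (cases "\<exists>y. a<y \<and> y<b")
    case False then show ?thesis by blast
  next
    case True
    then obtain y where y: "a<y" "y<b" by blast
    obtain x where x: "x \<in> C" "y \<in> U x" using C(2) by blast
    have xF: "x \<in> F" "l x \<in> F" "r x \<in> F" using x(1) by (auto simp: F_def)
    have "y \<noteq> x" using xF ab y by blast
    then consider "y < x" | "x < y" by fastforce
    then show ?thesis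
    proof cases
      case 1
      have xm: "x \<noteq> m" using 1 m[rule_format, of y] by auto
      have lxy: "l x < y" using x(2) xm by (simp add: U_def)
      have bx: "b \<le> x" using ab(4) xF y 1 by (meson not_le less_trans)
      have la: "l x \<le> a" using ab(4) xF y lxy by (meson not_le less_trans)
      show ?thesis
        apply (rule exI[of _ "L x"])
        using lL[OF xm] bx la by (meson order.strict_trans1 order.strict_trans2)
    next
      case 2
      have xM: "x \<noteq> M" using 2 M[rule_format, of y] by auto
      have lxy: "y < r x" using x(2) xM by (simp add: U_def)
      have ax: "x \<le> a" using ab(4) xF y 2 by (meson not_le less_trans)
      have rb: "b \<le> r x" using ab(4) xF y lxy by (meson not_le less_trans)
      show ?thesis
        apply (rule exI[of _ "G x"])
        using rr[OF xM] ax rb by (meson order.strict_trans1 order.strict_trans2)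
    qed
  qed
  define phi where "phi a b = (SOME c. \<forall>z. a<z \<and> z<b \<longrightarrow> \<bar>G z - c\<bar> \<le> e)" for a b
  have phi: "\<forall>z. a<z \<and> z<b \<longrightarrow> \<bar>G z - phi a b\<bar> \<le> e"
    if "a\<in>F" "b\<in>F" "a<b" "\<forall>z\<in>F. \<not>(a<z \<and> z<b)" for a b
    unfolding phi_def using someI_ex[OF key[OF that]] .
  define S where "S y = (if y \<in> F then G y else phi (Max {z\<in>F. z<y}) (Min {z\<in>F. y<z}))" for y
  have lohi: "Max {z\<in>F. z<y} \<in> F \<and> Min {z\<in>F. y<z} \<in> F \<and> Max {z\<in>F. z<y} < y \<and> y < Min {z\<in>F. y<z}
      \<and> (\<forall>z\<in>F. \<not>(Max {z\<in>F. z<y} < z \<and> z < Min {z\<in>F. y<z}))" if yF: "y \<notin> F" for y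
  proof -
    have f1: "finite {z\<in>F. z<y}" "finite {z\<in>F. y<z}" using finF by auto
    have mF: "m \<in> F" "M \<in> F" by (auto simp: F_def)
    have "m \<in> {z\<in>F. z<y}" using mF yF m[rule_format, of y] by (auto simp: less_le)
    then have ne1: "{z\<in>F. z<y} \<noteq> {}" by blast
    have "M \<in> {z\<in>F. y<z}" using mF yF M[rule_format, of y] by (auto simp: less_le)
    then have ne2: "{z\<in>F. y<z} \<noteq> {}" by blast
    have A: "Max {z\<in>F. z<y} \<in> {z\<in>F. z<y}" using Max_in[OF f1(1) ne1] .
    have B: "Min {z\<in>F. y<z} \<in> {z\<in>F. y<z}" using Min_in[OF f1(2) ne2] .
    have C1: "\<forall>z\<in>F. \<not>(Max {z\<in>F. z<y} < z \<and> z < Min {z\<in>F. y<z})"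
    proof (intro ballI notI)
      fix z assume z: "z \<in> F" "Max {z\<in>F. z<y} < z \<and> z < Min {z\<in>F. y<z}"
      have "z \<noteq> y" using z yF by blast
      then consider "z < y" | "y < z" by fastforce
      then show False
      proof cases
        case 1
        then have "z \<le> Max {z\<in>F. z<y}" using f1 z by (intro Max_ge) auto
        then show False using z by (meson leD)
      next
        case 2
        then have "Min {z\<in>F. y<z} \<le> z" using f1 z by (intro Min_le) auto
        then show False using z by (meson leD)
      qed
    qed
    show ?thesis using A B C1 by blast
  qed
  have close: "\<bar>S y - G y\<bar> \<le> e" for y
  proof (cases "y \<in> F")
    case True then show ?thesis using e by (simp add: S_def)
  next
    case False
    define a where "a = Max {z\<in>F. z<y}"
    define b where "b = Min {z\<in>F. y<z}"
    have h: "a \<in> F \<and> b \<in> F \<and> a < y \<and> y < b \<and> (\<forall>z\<in>F. \<not>(a < z \<and> z < b))"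
      using lohi[OF False] unfolding a_def b_def .
    have ab: "a < b" using h by (meson less_trans)
    have "\<bar>G y - phi a b\<bar> \<le> e" using phi[of a b] h ab by blast
    moreover have "S y = phi a b" using False by (simp add: S_def a_def b_def)
    ultimately show ?thesis by simp
  qed
  have step: "step_function S"
  proof (rule step_from_finite[OF finF, of m M])
    show "m \<in> F" "M \<in> F" by (auto simp: F_def)
    show "\<forall>x. m \<le> x" "\<forall>x. x \<le> M" using m M by auto
  next
    fix a b assume ab: "a\<in>F" "b\<in>F" "a<b" "\<forall>z\<in>F. \<not>(a<z \<and> z<b)"
    show "\<exists>c. \<forall>x. a<x \<and> x<b \<longrightarrow> S x = c"
    proof (intro exI allI impI)
      fix x assume x: "a<x \<and> x<b"
      have xF: "x \<notin> F" using ab x by blast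
      have f1: "finite {z\<in>F. z<x}" "finite {z\<in>F. x<z}" using finF by auto
      have "Max {z\<in>F. z<x} = a"
        apply (rule Max_eqI[OF f1(1)])
        subgoal for y using ab(4) x by (simp, meson leI less_trans)
        using ab x by simp
      moreover have "Min {z\<in>F. x<z} = b"
        apply (rule Min_eqI[OF f1(2)])
        subgoal for y using ab(4) x by (simp, meson leI less_trans)
        using ab x by simp
      ultimately show "S x = phi a b" using xF by (simp add: S_def)
    qed
  qed
  show ?thesis using step close by blast
qed

lemma step_cover:
  fixes s :: "nat \<Rightarrow> 'a::linorder"
  assumes s0: "\<forall>x. s 0 \<le> x" and sn: "\<forall>x. x \<le> s n"
  shows "x \<in> s ` {..n} \<or> (\<exists>k<n. s k < x \<and> x < s (Suc k))"
proof -
  define K where "K = {k. k \<le> n \<and> s k \<le> x}"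
  have finK: "finite K" unfolding K_def by simp
  have "0 \<in> K" using s0 unfolding K_def by simp
  then have neK: "K \<noteq> {}" by blast
  define k0 where "k0 = Max K"
  have k0K: "k0 \<in> K" unfolding k0_def using Max_in[OF finK neK] .
  show ?thesis
  proof (cases "s k0 = x")
    case True then show ?thesis using k0K unfolding K_def by blast
  next
    case False
    then have lt: "s k0 < x" using k0K unfolding K_def by (simp add: less_le)
    have "k0 \<noteq> n" using lt sn by (metis leD)
    then have kn: "k0 < n" using k0K unfolding K_def by simp
    have "Suc k0 \<notin> K"
    proof
      assume "Suc k0 \<in> K"
      then have "Suc k0 \<le> k0" unfolding k0_def using Max_ge[OF finK] by blast
      then show False by simp
    qed
    then have "x < s (Suc k0)" using kn unfolding K_def by auto
    then show ?thesis using lt kn by blast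
  qed
qed

lemma step_meas:
  fixes S :: "'a::linorder_topology \<Rightarrow> real"
  assumes "step_function S"
  shows "S \<in> borel_measurable borel"
proof -
  obtain s :: "nat \<Rightarrow> 'a" and n where s0: "\<forall>x. s 0 \<le> x" and sn: "\<forall>x. x \<le> s n"
    and cc: "\<forall>k<n. \<exists>c. \<forall>x. s k < x \<and> x < s (Suc k) \<longrightarrow> S x = c"
    using assms unfolding step_function_def by blast
  have "\<forall>k. \<exists>c. k < n \<longrightarrow> (\<forall>x. s k < x \<and> x < s (Suc k) \<longrightarrow> S x = c)" using cc by blast
  from choice[OF this] obtain c where c: "\<forall>k. k < n \<longrightarrow> (\<forall>x. s k < x \<and> x < s (Suc k) \<longrightarrow> S x = c k)" ..
  show ?thesis
  proof (rule borel_measurableI)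
    fix T :: "real set" assume T: "open T"
    have eq: "S -` T \<inter> space borel = (S -` T \<inter> s ` {..n}) \<union> (\<Union>k\<in>{k. k < n \<and> c k \<in> T}. {s k<..<s (Suc k)})"
    proof (intro equalityI subsetI)
      fix x assume x: "x \<in> S -` T \<inter> space borel"
      from step_cover[OF s0 sn, of x] show "x \<in> (S -` T \<inter> s ` {..n}) \<union> (\<Union>k\<in>{k. k < n \<and> c k \<in> T}. {s k<..<s (Suc k)})"
      proof
        assume "x \<in> s ` {..n}" then show ?thesis using x by blast
      next
        assume "\<exists>k<n. s k < x \<and> x < s (Suc k)"
        then obtain k where k: "k < n" "s k < x" "x < s (Suc k)" by blast
        then have "S x = c k" using c by blast
        then show ?thesis using x k by auto
      qed
    next
      fix x assume x: "x \<in> (S -` T \<inter> s ` {..n}) \<union> (\<Union>k\<in>{k. k < n \<and> c k \<in> T}. {s k<..<s (Suc k)})"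
      then show "x \<in> S -` T \<inter> space borel"
      proof
        assume "x \<in> S -` T \<inter> s ` {..n}" then show ?thesis by simp
      next
        assume "x \<in> (\<Union>k\<in>{k. k < n \<and> c k \<in> T}. {s k<..<s (Suc k)})"
        then obtain k where k: "k < n" "c k \<in> T" "s k < x" "x < s (Suc k)" by auto
        then have "S x = c k" using c by blast
        then show ?thesis using k by simp
      qed
    qed
    have A: "S -` T \<inter> s ` {..n} \<in> sets borel"
      by (rule borel_closed, rule finite_imp_closed) auto
    have B: "(\<Union>k\<in>{k. k < n \<and> c k \<in> T}. {s k<..<s (Suc k)}) \<in> sets borel"
      by (rule borel_open) auto
    show "S -` T \<inter> space borel \<in> sets borel" unfolding eq using A B by (rule sets.Un)
  qed
qed

theorem lemma4p2:
  fixes G :: "'a::linorder_topology \<Rightarrow> real"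
  assumes "compact (UNIV :: 'a set)"
    and "\<exists>a b :: 'a. a < b"
    and "regulated G"
  shows "(\<exists>S :: nat \<Rightarrow> 'a \<Rightarrow> real. (\<forall>n. step_function (S n)) \<and>
            uniform_limit UNIV S G sequentially)
         \<and> G \<in> borel_measurable borel"
proof -
  have "\<forall>n. \<exists>S. step_function S \<and> (\<forall>x. \<bar>S x - G x\<bar> \<le> 1 / real (Suc n))"
    using approx_step[OF assms(1) assms(3)] by simp
  from choice[OF this] obtain S where S: "\<forall>n. step_function (S n) \<and> (\<forall>x. \<bar>S n x - G x\<bar> \<le> 1 / real (Suc n))" ..
  have ul: "uniform_limit UNIV S G sequentially"
  proof (rule uniform_limitI)
    fix e :: real assume e: "e > 0"
    obtain N :: nat where N: "1 / e < real N" using reals_Archimedean2 by blast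
    show "\<forall>\<^sub>F n in sequentially. \<forall>x\<in>UNIV. dist (S n x) (G x) < e"
      unfolding eventually_sequentially
    proof (intro exI[of _ N] allI impI ballI)
      fix n x assume n: "N \<le> n"
      have "1 / e < real (Suc n)" using N n by linarith
      then have "1 / real (Suc n) < e" using e by (simp add: field_simps)
      then show "dist (S n x) (G x) < e" using S unfolding dist_real_def by (meson le_less_trans)
    qed
  qed
  have meas: "G \<in> borel_measurable borel"
  proof (rule borel_measurable_LIMSEQ_metric)
    show "S i \<in> borel_measurable borel" for i using S step_meas by blast
    show "(\<lambda>i. S i x) \<longlonglongrightarrow> G x" for x using tendsto_uniform_limitI[OF ul] by blast
  qed
  show ?thesis using S ul meas by blast
qed

end
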